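(* For every prime power $q$ and every $G\in\mathfrak{g}_3(\mathbb{F}_q)$, $G$ has exactly $q+1$ nonlooped vertices, and each nonlooped vertex of $G$ is adjacent to exactly $q$ nonlooped vertices and exactly $q^2-q$ looped vertices.
   Context: For a symmetric $n\times n$ matrix $A$, the looped graph corresponding to $A$, $\Gamma(A)$, has vertex set $\{1,\dots,n\}$, an edge $ij$ ($i\neq j$) iff $a_{ij}\neq0$, and a loop at $i$ iff $a_{ii}\ne 0$. Definition of $\mathfrak{g}_k(\mathbb{F}_q)$: let $x_1,\dots,x_m$ be representatives of the classes of nonzero vectors of $\mathbb{F}_q^k$ under the relation $x\sim cx$ ($c\in\mathbb{F}_q$, $c\neq0$), and let $U=[x_1\ \cdots\ x_m]$; $\mathfrak{g}_k(\mathbb{F}_q)$ is the set of isomorphism classes of looped graphs $\Gamma(U^tBU)$ as $B$ ranges over the invertible symmetric $k\times k$ matrices over $\mathbb{F}_q$. *)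

theory Defs
  imports "HOL-Analysis.Analysis"
begin

definition proj_equiv :: "'a::field ^ 'n \<Rightarrow> 'a ^ 'n \<Rightarrow> bool" where
  "proj_equiv x y \<longleftrightarrow> (\<exists>c. c \<noteq> 0 \<and> x = c *s y)"

text \<open>The list xs = [x_1, ..., x_m] (the columns of U) is a system of representatives
  of the classes of nonzero vectors under proj_equiv: every entry is nonzero and every
  nonzero vector is equivalent to exactly one entry (position).\<close>
definition proj_reps :: "('a::field ^ 'n) list \<Rightarrow> bool" where
  "proj_reps xs \<longleftrightarrow> (\<forall>i<length xs. xs ! i \<noteq> 0) \<and>
     (\<forall>x. x \<noteq> 0 \<longrightarrow> (\<exists>!i. i < length xs \<and> proj_equiv x (xs ! i)))"

text \<open>Entry (i,j) of U^t B U, i.e. x_i^t B x_j.\<close>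
definition gram_entry :: "('a::field ^ 'n) list \<Rightarrow> 'a ^ 'n ^ 'n \<Rightarrow> nat \<Rightarrow> nat \<Rightarrow> 'a" where
  "gram_entry xs B i j = (\<Sum>k\<in>UNIV. (xs ! i) $ k * (B *v (xs ! j)) $ k)"

text \<open>The looped graph Gamma(A) of a symmetric m x m matrix A (given by its entries),
  vertex set {0..<m}: edge ij (i \<noteq> j) iff a_ij \<noteq> 0, loop at i iff a_ii \<noteq> 0.\<close>
definition lg_edge :: "(nat \<Rightarrow> nat \<Rightarrow> 'a::zero) \<Rightarrow> nat \<Rightarrow> nat \<Rightarrow> bool" where
  "lg_edge A i j \<longleftrightarrow> i \<noteq> j \<and> A i j \<noteq> 0"

definition lg_loop :: "(nat \<Rightarrow> nat \<Rightarrow> 'a::zero) \<Rightarrow> nat \<Rightarrow> bool" where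
  "lg_loop A i \<longleftrightarrow> A i i \<noteq> 0"

end

theory Submission
  imports Defs
begin


definition bf :: "'a::field^3^3 \<Rightarrow> 'a^3 \<Rightarrow> 'a^3 \<Rightarrow> 'a" where
  "bf B u v = (\<Sum>k\<in>UNIV. u$k * (B *v v)$k)"

lemma bf_expand: "bf B u v = (\<Sum>k\<in>UNIV. \<Sum>l\<in>UNIV. u$k * B$k$l * v$l)"
  by (simp add: bf_def matrix_vector_mult_def sum_distrib_left mult.assoc)

lemma bf_add_left: "bf B (u + w) v = bf B u v + bf B w v"
  by (simp add: bf_def distrib_right sum.distrib)
lemma bf_add_right: "bf B u (v + w) = bf B u v + bf B u w"
  by (simp add: bf_expand distrib_left distrib_right sum.distrib)
lemma bf_smult_left: "bf B (c *s u) v = c * bf B u v"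
  by (simp add: bf_def sum_distrib_left mult.assoc)
lemma bf_smult_right: "bf B u (c *s v) = c * bf B u v"
  by (simp add: bf_expand sum_distrib_left algebra_simps)
lemma bf_sym: assumes "transpose B = B" shows "bf B u v = bf B v u"
proof -
  have s: "B$k$l = B$l$k" for k l
    using arg_cong[of _ _ "\<lambda>M. M$k$l", OF assms] by (simp add: transpose_def)
  show ?thesis unfolding bf_expand
    by (subst sum.swap) (simp add: s ac_simps)
qed

lemma smult_nz: "c \<noteq> 0 \<Longrightarrow> (v::'a::field^'n) \<noteq> 0 \<Longrightarrow> c *s v \<noteq> 0"
  by (auto simp: vec_eq_iff)

lemma smult_inj: "(v::'a::field^'n) \<noteq> 0 \<Longrightarrow> c *s v = d *s v \<Longrightarrow> c = d"
  by (auto simp: vec_eq_iff)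

lemma card_multiples:
  assumes "(v::'a::{field,finite}^'n) \<noteq> 0"
  shows "card ((\<lambda>c. c *s v) ` A) = card A"
  by (rule card_image) (meson assms inj_onI smult_inj)

lemma proj_count:
  fixes xs :: "('a::{field,finite}^'n) list"
  assumes pr: "proj_reps xs" and inv: "\<And>c x. c \<noteq> 0 \<Longrightarrow> P (c *s x) = P x"
  shows "card {x. x \<noteq> 0 \<and> P x} = (CARD('a) - 1) * card {i. i < length xs \<and> P (xs!i)}"
proof -
  let ?I = "{i. i < length xs \<and> P (xs!i)}"
  define cls where "cls i = (\<lambda>c. c *s (xs!i)) ` (UNIV - {0})" for i
  have nz: "i < length xs \<Longrightarrow> xs!i \<noteq> 0" for i using pr unfolding proj_reps_def by blast
  have uq: "\<And>x. x \<noteq> 0 \<Longrightarrow> \<exists>!i. i < length xs \<and> proj_equiv x (xs ! i)"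
    using pr unfolding proj_reps_def by blast
  have S: "{x. x \<noteq> 0 \<and> P x} = (\<Union>i\<in>?I. cls i)"
  proof (intro equalityI subsetI)
    fix x assume "x \<in> {x. x \<noteq> 0 \<and> P x}"
    then have x: "x \<noteq> 0" "P x" by auto
    obtain i where i: "i < length xs" "proj_equiv x (xs!i)" using uq[OF x(1)] by blast
    then obtain c where c: "c \<noteq> 0" "x = c *s xs!i" unfolding proj_equiv_def by blast
    have "P (xs!i)" using inv[OF c(1), of "xs!i"] c x by simp
    then show "x \<in> (\<Union>i\<in>?I. cls i)" using i c unfolding cls_def by auto
  next
    fix x assume "x \<in> (\<Union>i\<in>?I. cls i)"
    then obtain i c where i: "i < length xs" "P (xs!i)" and c: "c \<noteq> 0" "x = c *s xs!i"
      unfolding cls_def by auto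
    then show "x \<in> {x. x \<noteq> 0 \<and> P x}" using inv[OF c(1), of "xs!i"] nz smult_nz by auto
  qed
  have "card (\<Union>i\<in>?I. cls i) = (\<Sum>i\<in>?I. card (cls i))"
  proof (rule card_UN_disjoint)
    show "finite ?I" by simp
    show "\<forall>i\<in>?I. finite (cls i)" by simp
    show "\<forall>i\<in>?I. \<forall>j\<in>?I. i \<noteq> j \<longrightarrow> cls i \<inter> cls j = {}"
    proof (intro ballI impI)
      fix i j assume i: "i \<in> ?I" and j: "j \<in> ?I" and ij: "i \<noteq> j"
      show "cls i \<inter> cls j = {}"
      proof (rule ccontr)
        assume "cls i \<inter> cls j \<noteq> {}"
        then obtain x where "x \<in> cls i" "x \<in> cls j" by blast
        then obtain c d where c: "c \<noteq> 0" "x = c *s xs!i" and d: "d \<noteq> 0" "x = d *s xs!j"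
          unfolding cls_def by blast
        have "x \<noteq> 0" using c nz i smult_nz by auto
        moreover have "proj_equiv x (xs!i)" "proj_equiv x (xs!j)" using c d unfolding proj_equiv_def by auto
        ultimately show False using uq i j ij by blast
      qed
    qed
  qed
  also have "\<dots> = (\<Sum>i\<in>?I. CARD('a) - 1)"
  proof (rule sum.cong)
    fix i assume "i \<in> ?I"
    then have "i < length xs" by simp
    then have "card (cls i) = card (UNIV - {0::'a})" unfolding cls_def by (rule card_multiples[OF nz])
    then show "card (cls i) = CARD('a) - 1" by (simp add: card_Diff_subset)
  qed simp
  finally show ?thesis using S by simp
qed

lemma lin_fiber_card:
  fixes l :: "'a::{field,finite}^3 \<Rightarrow> 'a"
  assumes add: "\<And>u v. l (u+v) = l u + l v" and sm: "\<And>c u. l (c *s u) = c * l u" and nz: "l u0 \<noteq> 0"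
  shows "card {y. l y = c} = CARD('a)^2"
proof -
  have eq: "card {y. l y = c} = card {y. l y = 0}" for c
  proof -
    define t where "t = (c / l u0) *s u0"
    have lt: "l t = c" using nz by (simp add: t_def sm)
    have md: "l (y - t) = l y - l t" for y using add[of "y - t" t] by simp
    have "(\<lambda>y. y + t) ` {y. l y = 0} = {y. l y = c}"
    proof (intro equalityI subsetI)
      fix y assume "y \<in> {y. l y = c}"
      then have "y - t \<in> {y. l y = 0}" using md lt by simp
      then show "y \<in> (\<lambda>y. y + t) ` {y. l y = 0}" by (rule rev_image_eqI) simp
    qed (auto simp: add lt)
    moreover have "inj_on (\<lambda>y. y + t) {y. l y = 0}" by (auto intro: inj_onI)
    ultimately show ?thesis by (metis card_image)
  qed
  have "(UNIV :: ('a^3) set) = (\<Union>c\<in>UNIV. {y. l y = c})" by auto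
  then have "CARD('a^3) = card (\<Union>c\<in>UNIV. {y. l y = c})" by simp
  also have "\<dots> = (\<Sum>c\<in>UNIV. card {y. l y = c})"
    by (rule card_UN_disjoint) auto
  also have "\<dots> = (\<Sum>c\<in>(UNIV::'a set). card {y. l y = 0})"
    by (rule sum.cong) (auto intro: eq)
  also have "\<dots> = CARD('a) * card {y. l y = 0}" by simp
  finally have "CARD('a)^3 = CARD('a) * card {y. l y = 0}" by simp
  then have "card {y. l y = 0} = CARD('a)^2" by (simp add: power3_eq_cube power2_eq_square)
  then show ?thesis using eq by simp
qed



lemma gram_mat: "((R ** B) ** transpose R) $ i $ j = bf B (R$i) (R$j)"
  apply (simp add: matrix_matrix_mult_def transpose_def bf_expand sum_distrib_right)
  by (rule sum.swap)

lemma sym_entry: "transpose B = B \<Longrightarrow> B$k$l = B$l$k"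
  using arg_cong[of _ _ "\<lambda>M. M$k$l"] by (metis transpose_def vec_lambda_beta)

lemma tangent:
  fixes B :: "'a::field^3^3"
  assumes sym: "transpose B = B" and inv: "invertible B"
    and x: "x \<noteq> 0" "bf B x x = 0" and y: "bf B y y = 0" "bf B x y = 0"
  shows "\<exists>c. y = c *s x"
proof -
  have dB: "det B \<noteq> 0" using inv invertible_det_nz by blast
  have yx: "bf B y x = 0" using y bf_sym[OF sym] by metis
  have cr: "x$1 * y$2 * w$3 + x$2 * y$3 * w$1 + x$3 * y$1 * w$2 - x$1 * y$3 * w$2 - x$2 * y$1 * w$3 - x$3 * y$2 * w$1 = 0" for w :: "'a^3"
  proof -
    define R :: "'a^3^3" where "R = (\<chi> i. if i = 1 then x else if i = 2 then y else w)"
    have R: "R$1 = x" "R$2 = y" "R$3 = w" by (simp_all add: R_def)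
    have "det ((R ** B) ** transpose R) = 0"
      unfolding det_3 gram_mat R using x y yx by simp
    then have "det R * det B * det R = 0" by (simp add: det_mul)
    then have "det R = 0" using dB by simp
    then show ?thesis unfolding det_3 using R by (simp add: R_def)
  qed
  have c1: "x$1 * y$2 = x$2 * y$1" using cr[of "\<chi> j. if j = 3 then 1 else 0"] by simp
  have c2: "x$3 * y$1 = x$1 * y$3" using cr[of "\<chi> j. if j = 2 then 1 else 0"] by simp
  have c3: "x$2 * y$3 = x$3 * y$2" using cr[of "\<chi> j. if j = 1 then 1 else 0"] by simp
  have call: "x$k * y$j = x$j * y$k" for j k
    using exhaust_3[of j] exhaust_3[of k] c1 c2 c3 by (auto simp: ac_simps)
  obtain k where k: "x$k \<noteq> 0" using x by (auto simp: vec_eq_iff)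
  have "y = (y$k / x$k) *s x"
  proof (subst vec_eq_iff, intro allI)
    fix j show "y$j = ((y$k / x$k) *s x)$j" using call[of j k] k by (simp add: field_simps)
  qed
  then show ?thesis by blast
qed



lemma Q3:
  assumes sym: "transpose B = B"
  shows "bf B x x = B$1$1*x$1^2 + B$2$2*x$2^2 + B$3$3*x$3^2 + 2*B$1$2*x$1*x$2 + 2*B$1$3*x$1*x$3 + 2*B$2$3*x$2*x$3"
  using sym_entry[OF sym, of 2 1] sym_entry[OF sym, of 3 1] sym_entry[OF sym, of 3 2]
  by (simp add: bf_expand sum_3 power2_eq_square algebra_simps)

lemma id1:
  fixes a b c d e f x y z :: "'a::comm_ring_1"
  shows "a * (a*x^2 + d*y^2 + f*z^2 + 2*b*x*y + 2*c*x*z + 2*e*y*z) =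
    (a*x + b*y + c*z)^2 + (a*d - b^2)*y^2 + 2*(a*e - b*c)*y*z + (a*f - c^2)*z^2"
  by (simp add: power2_eq_square algebra_simps)

lemma id2:
  fixes d2 e d3 y z :: "'a::comm_ring_1"
  shows "d2 * (d2*y^2 + 2*e*y*z + d3*z^2) = (d2*y + e*z)^2 + (d2*d3 - e^2)*z^2"
  by (simp add: power2_eq_square algebra_simps)

lemma sq_card: "CARD('a::{field,finite}) + 1 \<le> 2 * card ((\<lambda>x::'a. x^2) ` UNIV)"
proof -
  let ?S = "(\<lambda>x::'a. x^2) ` UNIV"
  define F where "F s = {x::'a. x^2 = s}" for s
  have U: "(UNIV::'a set) = (\<Union>s\<in>?S. F s)" unfolding F_def by auto
  have "CARD('a) = (\<Sum>s\<in>?S. card (F s))"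
    by (subst U, rule card_UN_disjoint) (auto simp: F_def)
  also have "\<dots> = card (F 0) + (\<Sum>s\<in>?S - {0}. card (F s))"
    by (rule sum.remove) (auto intro: rev_image_eqI[of 0])
  also have "card (F 0) = 1" unfolding F_def by simp
  also have "(\<Sum>s\<in>?S - {0}. card (F s)) \<le> (\<Sum>s\<in>?S - {0}. 2)"
  proof (rule sum_mono)
    fix s assume "s \<in> ?S - {0}"
    then obtain r where r: "s = r^2" by auto
    have "F s \<subseteq> {r, -r}" unfolding F_def r using power2_eq_iff by auto
    then have "card (F s) \<le> card {r, -r}" by (rule card_mono[rotated]) simp
    also have "\<dots> \<le> 2" by (simp add: card_insert_if)
    finally show "card (F s) \<le> 2" .
  qed
  also have "(\<Sum>s\<in>?S - {0}. 2) = card (?S - {0}) * 2" by simp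
  also have "card (?S - {0}) = card ?S - 1"
    by (rule card_Diff_singleton) (auto intro: rev_image_eqI[of 0])
  finally have "CARD('a) \<le> 1 + (card ?S - 1) * 2" by simp
  moreover have "card ?S \<ge> 1" using card_0_eq[of ?S] by (metis UNIV_not_empty empty_is_image finite less_one not_le)
  ultimately show ?thesis by linarith
qed

lemma iso_exists:
  fixes B :: "'a::{field,finite}^3^3"
  assumes sym: "transpose B = B"
  shows "\<exists>x. x \<noteq> 0 \<and> bf B x x = 0"
proof -
  define a where "a = B$1$1"
  define b where "b = B$1$2"
  define c where "c = B$1$3"
  define d where "d = B$2$2"
  define e where "e = B$2$3"
  define f where "f = B$3$3"
  have Q: "bf B x x = a*x$1^2 + d*x$2^2 + f*x$3^2 + 2*b*x$1*x$2 + 2*c*x$1*x$3 + 2*e*x$2*x$3" for x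
    unfolding Q3[OF sym] a_def b_def c_def d_def e_def f_def by simp
  define mk :: "'a \<Rightarrow> 'a \<Rightarrow> 'a \<Rightarrow> 'a^3" where "mk p r t = (\<chi> j. if j = 1 then p else if j = 2 then r else t)" for p r t
  have mk: "mk p r t $ 1 = p" "mk p r t $ 2 = r" "mk p r t $ 3 = t" for p r t by (simp_all add: mk_def)
  have mknz: "r \<noteq> 0 \<Longrightarrow> mk p r t \<noteq> 0" "t \<noteq> 0 \<Longrightarrow> mk p r t \<noteq> 0" for p r t
    using mk by (metis zero_index)+
  define d2 where "d2 = a*d - b^2"
  define e2 where "e2 = a*e - b*c"
  define d3 where "d3 = a*f - c^2"
  have I: "a * bf B (mk p r t) (mk p r t) = (a*p + b*r + c*t)^2 + d2*r^2 + 2*e2*r*t + d3*t^2" for p r t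
    unfolding Q mk d2_def e2_def d3_def by (rule id1)
  show ?thesis
  proof (cases "a = 0")
    case True
    have "mk 1 0 0 \<noteq> 0" using mk by (metis one_neq_zero zero_index)
    moreover have "bf B (mk 1 0 0) (mk 1 0 0) = 0" unfolding Q mk using True by simp
    ultimately show ?thesis by blast
  next
    case a: False
    show ?thesis
    proof (cases "d2 = 0")
      case True
      have "a * (- b / a) + b * 1 + c * 0 = 0" using a by (simp add: field_simps)
      then have "a * bf B (mk (-b/a) 1 0) (mk (-b/a) 1 0) = 0" unfolding I using True by simp
      then show ?thesis using a mknz(1)[of 1] by (metis mult_eq_0_iff one_neq_zero)
    next
      case d2: False
      define D where "D = d2*d3 - e2^2"
      let ?A = "(\<lambda>X. d2 * X^2) ` UNIV" and ?B = "(\<lambda>Y. - D - Y^2) ` UNIV"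
      have cA: "card ?A = card ((\<lambda>x::'a. x^2) ` UNIV)"
      proof -
        have "?A = (\<lambda>s. d2 * s) ` ((\<lambda>x::'a. x^2) ` UNIV)" by (simp add: image_image)
        moreover have "inj_on (\<lambda>s. d2 * s) A" for A using d2 by (auto intro: inj_onI)
        ultimately show ?thesis by (simp add: card_image)
      qed
      have cB: "card ?B = card ((\<lambda>x::'a. x^2) ` UNIV)"
      proof -
        have "?B = (\<lambda>s. - D - s) ` ((\<lambda>x::'a. x^2) ` UNIV)" by (simp add: image_image)
        moreover have "inj_on (\<lambda>s::'a. - D - s) A" for A by (auto intro: inj_onI)
        ultimately show ?thesis by (simp add: card_image)
      qed
      have "?A \<inter> ?B \<noteq> {}"
      proof
        assume "?A \<inter> ?B = {}"
        then have "card (?A \<union> ?B) = card ?A + card ?B" by (simp add: card_Un_disjoint)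
        moreover have "card (?A \<union> ?B) \<le> CARD('a)" by (rule card_mono) auto
        ultimately show False using sq_card[where 'a='a] cA cB by linarith
      qed
      then obtain X Y where XY: "d2 * X^2 = - D - Y^2" by auto
      define r where "r = (Y - e2) / d2"
      define p where "p = (X - b*r - c) / a"
      have p: "a*p + b*r + c*1 = X" using a by (simp add: p_def field_simps)
      have r: "d2*r + e2*1 = Y" using d2 by (simp add: r_def field_simps)
      have "d2 * (a * bf B (mk p r 1) (mk p r 1)) = d2 * X^2 + (d2*(d2*r^2 + 2*e2*r*1 + d3*1^2))"
        unfolding I p by (simp add: algebra_simps)
      also have "\<dots> = d2 * X^2 + Y^2 + D" unfolding id2 r D_def by simp
      also have "\<dots> = 0" using XY by simp
      finally have "bf B (mk p r 1) (mk p r 1) = 0" using a d2 by simp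
      then show ?thesis using mknz(2)[of 1] by (metis one_neq_zero)
    qed
  qed
qed



lemma sum_ind: "(\<Sum>j\<in>UNIV. (if j = k then 1 else 0) * (f j::'a::semiring_1)) = f (k::'n::finite)"
proof -
  have "(\<Sum>j\<in>UNIV. (if j = k then 1 else 0) * f j) = (\<Sum>j\<in>UNIV. if j = k then f j else 0)"
    by (rule sum.cong) auto
  then show ?thesis by simp
qed

lemma sum_ind': "(\<Sum>j\<in>UNIV. (f j::'a::semiring_1) * (if j = k then 1 else 0)) = f (k::'n::finite)"
proof -
  have "(\<Sum>j\<in>UNIV. f j * (if j = k then 1 else 0)) = (\<Sum>j\<in>UNIV. if j = k then f j else 0)"
    by (rule sum.cong) auto
  then show ?thesis by simp
qed

lemma bf_nondeg:
  fixes B :: "'a::field^3^3"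
  assumes sym: "transpose B = B" and inv: "invertible B" and x: "x \<noteq> 0"
  shows "\<exists>u. bf B x u \<noteq> 0"
proof -
  obtain B' where B': "B' ** B = mat 1" using inv unfolding invertible_def by blast
  have "B *v x \<noteq> 0"
  proof
    assume "B *v x = 0"
    then have "B' *v (B *v x) = 0" by simp
    then show False using x B' by (simp add: matrix_vector_mul_assoc)
  qed
  then obtain k where k: "(B *v x)$k \<noteq> 0" by (auto simp: vec_eq_iff)
  have "bf B (axis k 1) x = (B *v x)$k" by (simp add: bf_def axis_def sum_ind)
  then show ?thesis using k bf_sym[OF sym] by metis
qed

lemma Q_smult: "bf B (c *s y) (c *s y) = c^2 * bf B y y"
  by (simp add: bf_smult_left bf_smult_right power2_eq_square)

lemma Q_shift:
  assumes sym: "transpose B = B"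
  shows "bf B (y + s *s x) (y + s *s x) = bf B y y + 2 * s * bf B x y + s^2 * bf B x x"
  using bf_sym[OF sym, of y x]
  by (simp add: bf_add_left bf_add_right bf_smult_left bf_smult_right power2_eq_square algebra_simps)

lemma conic_card:
  fixes B :: "'a::{field,finite}^3^3"
  assumes sym: "transpose B = B" and inv: "invertible B"
  shows "card {y. bf B y y = 0} = CARD('a)^2"
proof (cases "(2::'a) = 0")
  case False
  obtain x0 where x0: "x0 \<noteq> 0" "bf B x0 x0 = 0" using iso_exists[OF sym] by blast
  define l where "l y = bf B x0 y" for y
  obtain u0 where u0: "l u0 \<noteq> 0" using bf_nondeg[OF sym inv x0(1)] l_def by auto
  have Kc: "card {y. l y = c} = CARD('a)^2" for c
  proof -
    have a: "l (u+v) = l u + l v" for u v by (simp add: l_def bf_add_right)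
    have b: "l (c *s u) = c * l u" for c u by (simp add: l_def bf_smult_right)
    show ?thesis by (rule lin_fiber_card[OF a b u0])
  qed
  define C where "C = {y. bf B y y = 0}"
  define S where "S = C \<inter> {y. l y = 1}"
  have lshift: "l (y + s *s x0) = l y" for y s using x0 by (simp add: l_def bf_add_right bf_smult_right)
  have Qshift: "bf B (y + s *s x0) (y + s *s x0) = bf B y y + 2 * s * l y" for y s
    using Q_shift[OF sym, of y s x0] x0 by (simp add: l_def)
  define L where "L z = (\<lambda>s. z + s *s x0) ` UNIV" for z
  have K1: "{y. l y = 1} = (\<Union>z\<in>S. L z)"
  proof (intro equalityI subsetI)
    fix y assume y: "y \<in> {y. l y = 1}"
    define z where "z = y + (- (bf B y y / 2)) *s x0"
    have q1: "bf B z z = bf B y y + 2 * (- (bf B y y / 2)) * l y" unfolding z_def by (rule Qshift)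
    have q2: "l z = l y" unfolding z_def by (rule lshift)
    have "z \<in> S" using y False q1 q2 unfolding S_def C_def by simp
    moreover have "y = z + (bf B y y / 2) *s x0" unfolding z_def
      by (simp add: vec_eq_iff algebra_simps)
    ultimately show "y \<in> (\<Union>z\<in>S. L z)" unfolding L_def by blast
  next
    fix y assume "y \<in> (\<Union>z\<in>S. L z)"
    then show "y \<in> {y. l y = 1}" unfolding L_def S_def by (auto simp: lshift)
  qed
  have "card {y. l y = 1} = (\<Sum>z\<in>S. card (L z))"
  proof (subst K1, rule card_UN_disjoint)
    show "\<forall>i\<in>S. \<forall>j\<in>S. i \<noteq> j \<longrightarrow> L i \<inter> L j = {}"
    proof (intro ballI impI)
      fix z z' assume z: "z \<in> S" and z': "z' \<in> S" and ne: "z \<noteq> z'"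
      show "L z \<inter> L z' = {}"
      proof (rule ccontr)
        assume "L z \<inter> L z' \<noteq> {}"
        then obtain s t where st: "z + s *s x0 = z' + t *s x0" unfolding L_def by auto
        then have zz: "z' = z + (s - t) *s x0" by (simp add: vec_eq_iff algebra_simps)
        have "bf B z' z' = bf B z z + 2 * (s - t) * l z" unfolding zz by (rule Qshift)
        then have "s = t" using z z' False unfolding S_def C_def by simp
        then show False using zz ne by simp
      qed
    qed
  qed simp_all
  also have "\<dots> = (\<Sum>z\<in>S. CARD('a))"
    by (rule sum.cong) (simp_all add: L_def card_multiples x0 card_image inj_on_def)
  finally have "CARD('a)^2 = card S * CARD('a)" using Kc by simp
  then have cS: "card S = CARD('a)" by (simp add: power2_eq_square)
  have C0: "C \<inter> {y. l y = 0} = (\<lambda>c. c *s x0) ` UNIV"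
  proof (intro equalityI subsetI)
    fix y assume "y \<in> C \<inter> {y. l y = 0}"
    then obtain c where "y = c *s x0" using tangent[OF sym inv x0] unfolding C_def l_def by auto
    then show "y \<in> (\<lambda>c. c *s x0) ` UNIV" by blast
  next
    fix y assume "y \<in> (\<lambda>c. c *s x0) ` UNIV"
    then show "y \<in> C \<inter> {y. l y = 0}" using x0 unfolding C_def l_def
      by (auto simp: Q_smult bf_smult_right bf_smult_left)
  qed
  have cC0: "card (C \<inter> {y. l y = 0}) = CARD('a)" unfolding C0 using card_multiples[OF x0(1)] by simp
  have C1: "C - {y. l y = 0} = (\<Union>c\<in>UNIV - {0}. (\<lambda>y. c *s y) ` S)"
  proof (intro equalityI subsetI)
    fix y assume y: "y \<in> C - {y. l y = 0}"
    define c where "c = l y"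
    have c: "c \<noteq> 0" using y c_def by simp
    have "(1/c) *s y \<in> S" using y c unfolding S_def C_def c_def
      by (simp add: Q_smult l_def bf_smult_right bf_smult_left)
    moreover have "y = c *s ((1/c) *s y)" using c by (simp add: vec_eq_iff)
    ultimately show "y \<in> (\<Union>c\<in>UNIV - {0}. (\<lambda>y. c *s y) ` S)" using c by blast
  next
    fix y assume "y \<in> (\<Union>c\<in>UNIV - {0}. (\<lambda>y. c *s y) ` S)"
    then show "y \<in> C - {y. l y = 0}" unfolding S_def C_def
      by (auto simp: Q_smult l_def bf_smult_right bf_smult_left)
  qed
  have "card (C - {y. l y = 0}) = (\<Sum>c\<in>UNIV - {0}. card ((\<lambda>y. c *s y) ` S))"
  proof (subst C1, rule card_UN_disjoint)
    show "\<forall>i\<in>UNIV - {0}. \<forall>j\<in>UNIV - {0}. i \<noteq> j \<longrightarrow> (\<lambda>y. i *s y) ` S \<inter> (\<lambda>y. j *s y) ` S = {}"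
    proof (intro ballI impI)
      fix i j :: 'a assume ij: "i \<in> UNIV - {0}" "j \<in> UNIV - {0}" "i \<noteq> j"
      show "(\<lambda>y. i *s y) ` S \<inter> (\<lambda>y. j *s y) ` S = {}"
      proof (rule ccontr)
        assume "(\<lambda>y. i *s y) ` S \<inter> (\<lambda>y. j *s y) ` S \<noteq> {}"
        then obtain a b where ab: "a \<in> S" "b \<in> S" "i *s a = j *s b" by blast
        have "i * bf B x0 a = j * bf B x0 b" using ab(3) by (metis bf_smult_right)
        then have "i = j" using ab unfolding S_def l_def by simp
        then show False using ij by simp
      qed
    qed
  qed simp_all
  also have "\<dots> = (\<Sum>c\<in>UNIV - {0::'a}. CARD('a))"
  proof (rule sum.cong)
    fix c :: 'a assume "c \<in> UNIV - {0}"
    then have "inj_on (\<lambda>y. c *s y) S" by (auto simp: inj_on_def vec_eq_iff)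
    then show "card ((\<lambda>y. c *s y) ` S) = CARD('a)" using cS by (simp add: card_image)
  qed simp
  finally have cC1: "card (C - {y. l y = 0}) = (CARD('a) - 1) * CARD('a)"
    by (simp add: card_Diff_subset)
  have "card C = card (C \<inter> {y. l y = 0}) + card (C - {y. l y = 0})"
    by (metis card_Int_Diff finite)
  also have "\<dots> = CARD('a) + (CARD('a) - 1) * CARD('a)" using cC0 cC1 by simp
  also have "\<dots> = CARD('a)^2"
    using finite_UNIV_card_ge_0[where 'a='a] by (cases "CARD('a)") (auto simp: power2_eq_square)
  finally show ?thesis unfolding C_def .
next
  case two: True
  have dbl: "a + a = 0" for a :: 'a using mult_2[of a] two by simp
  have injsq: "inj (\<lambda>x::'a. x * x)"
  proof (rule injI)
    fix x y :: 'a assume "x * x = y * y"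
    moreover have "(x - y) * (x - y) = x*x + y*y - (x*y + x*y)" by (simp add: algebra_simps)
    ultimately have "(x - y) * (x - y) = 0" using dbl[of "y*y"] dbl[of "x*y"] by simp
    then show "x = y" by simp
  qed
  have surjsq: "surj (\<lambda>x::'a. x * x)" by (rule finite_UNIV_inj_surj[OF _ injsq]) simp
  define sq where "sq z = inv (\<lambda>x::'a. x * x) z" for z
  have sqsq: "sq z * sq z = z" for z unfolding sq_def using surj_f_inv_f[OF surjsq, of z] by simp
  have sq_eq: "w * w = z \<Longrightarrow> sq z = w" for w z unfolding sq_def using inv_f_f[OF injsq, of w] by simp
  define l where "l y = sq (bf B y y)" for y
  have Qadd: "bf B (u + v) (u + v) = bf B u u + bf B v v" for u v
  proof -
    have "bf B (u + v) (u + v) = bf B u u + bf B v v + (bf B u v + bf B u v)"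
      using bf_sym[OF sym, of u v] by (simp add: bf_add_left bf_add_right algebra_simps)
    then show ?thesis using dbl by simp
  qed
  have ladd: "l (u + v) = l u + l v" for u v
  proof -
    have "(sq (bf B u u) + sq (bf B v v)) * (sq (bf B u u) + sq (bf B v v))
       = sq (bf B u u) * sq (bf B u u) + sq (bf B v v) * sq (bf B v v) + (sq (bf B u u) * sq (bf B v v) + sq (bf B u u) * sq (bf B v v))"
      by (simp add: algebra_simps)
    then have "(sq (bf B u u) + sq (bf B v v)) * (sq (bf B u u) + sq (bf B v v)) = bf B (u+v) (u+v)"
      using dbl by (simp add: sqsq Qadd)
    then show ?thesis unfolding l_def by (rule sq_eq)
  qed
  have lsm: "l (c *s u) = c * l u" for c u
    unfolding l_def Q_smult by (rule sq_eq) (simp add: sqsq power2_eq_square algebra_simps)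
  have "\<exists>y. bf B y y \<noteq> 0"
  proof (rule ccontr)
    assume "\<not> (\<exists>y. bf B y y \<noteq> 0)"
    then have all0: "bf B y y = 0" for y by blast
    have dg: "B$k$k = 0" for k using all0[of "axis k 1"] by (simp add: bf_def axis_def matrix_vector_mult_def sum_ind sum_ind')
    have "det B = (B$1$2 * B$2$3 * B$1$3) + (B$1$2 * B$2$3 * B$1$3)"
      unfolding det_3 dg using sym_entry[OF sym, of 2 1] sym_entry[OF sym, of 3 1] sym_entry[OF sym, of 3 2]
      by (simp add: algebra_simps)
    then have "det B = 0" using dbl by simp
    then show False using inv invertible_det_nz by blast
  qed
  then obtain y0 where y0: "bf B y0 y0 \<noteq> 0" by blast
  have ly0: "l y0 \<noteq> 0"
  proof
    assume "l y0 = 0"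
    then have "bf B y0 y0 = 0" using sqsq[of "bf B y0 y0"] unfolding l_def by simp
    then show False using y0 by simp
  qed
  have s0: "sq 0 = 0" by (rule sq_eq) simp
  have "{y. bf B y y = 0} = {y. l y = 0}"
  proof (intro Collect_cong iffI)
    fix y assume "bf B y y = 0" then show "l y = 0" unfolding l_def using s0 by simp
  next
    fix y assume "l y = 0" then show "bf B y y = 0" using sqsq[of "bf B y y"] unfolding l_def by simp
  qed
  then show ?thesis using lin_fiber_card[OF ladd lsm ly0] by simp
qed



lemma nat_facts:
  fixes q :: nat assumes "q \<ge> 2"
  shows "q^2 - 1 = (q - 1) * (q + 1)" "q^2 - q = (q - 1) * q"
    "(q^3 - q^2) - (q^2 - q) = (q - 1) * (q^2 - q)"
proof -
  obtain m where m: "q = m + 2" using assms by (metis add.commute le_iff_add)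
  show "q^2 - 1 = (q - 1) * (q + 1)" "q^2 - q = (q - 1) * q"
    "(q^3 - q^2) - (q^2 - q) = (q - 1) * (q^2 - q)"
    unfolding m by (simp_all add: power2_eq_square power3_eq_cube algebra_simps)
qed

lemma card_ge2: "CARD('a::{field,finite}) \<ge> 2"
proof -
  have "card {0::'a, 1} \<le> CARD('a)" by (rule card_mono) auto
  then show ?thesis by simp
qed

theorem mainTheorem17:
  fixes xs :: "('a::{field,finite} ^ 3) list" and B :: "'a ^ 3 ^ 3"
  assumes "proj_reps xs"
    and "transpose B = B"
    and "invertible B"
  shows "card {i. i < length xs \<and> \<not> lg_loop (gram_entry xs B) i} = CARD('a) + 1
       \<and> (\<forall>i < length xs. \<not> lg_loop (gram_entry xs B) i \<longrightarrow>
            card {j. j < length xs \<and> lg_edge (gram_entry xs B) i j \<and> \<not> lg_loop (gram_entry xs B) j} = CARD('a)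
          \<and> card {j. j < length xs \<and> lg_edge (gram_entry xs B) i j \<and> lg_loop (gram_entry xs B) j}
              = CARD('a) ^ 2 - CARD('a))"
proof -
  note pr = assms(1) and sym = assms(2) and inv = assms(3)
  let ?q = "CARD('a)"
  have q2: "?q \<ge> 2" by (rule card_ge2)
  have qpos: "?q - 1 > 0" using q2 by simp
  have G: "gram_entry xs B i j = bf B (xs!i) (xs!j)" for i j by (simp add: gram_entry_def bf_def)
  have nz: "i < length xs \<Longrightarrow> xs!i \<noteq> 0" for i using pr unfolding proj_reps_def by blast
  define C where "C = {y::'a^3. bf B y y = 0}"
  have cC: "card C = ?q^2" unfolding C_def by (rule conic_card[OF sym inv])
  have Qinv: "c \<noteq> 0 \<Longrightarrow> (bf B (c *s y) (c *s y) = 0) = (bf B y y = 0)" for c y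
    by (simp add: Q_smult)
  have part1: "card {i. i < length xs \<and> \<not> lg_loop (gram_entry xs B) i} = ?q + 1"
  proof -
    have "{i. i < length xs \<and> \<not> lg_loop (gram_entry xs B) i} = {i. i < length xs \<and> bf B (xs!i) (xs!i) = 0}"
      by (simp add: lg_loop_def G)
    moreover have "card {x. x \<noteq> 0 \<and> bf B x x = 0} = (?q - 1) * card {i. i < length xs \<and> bf B (xs!i) (xs!i) = 0}"
      by (rule proj_count[OF pr]) (rule Qinv)
    moreover have "{x. x \<noteq> 0 \<and> bf B x x = 0} = C - {0}" unfolding C_def by auto
    moreover have "card (C - {0}) = ?q^2 - 1" using cC
      by (simp add: card_Diff_singleton C_def bf_def)
    ultimately have h: "(?q - 1) * card {i. i < length xs \<and> \<not> lg_loop (gram_entry xs B) i} = ?q^2 - 1"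
      by simp
    then have "(?q - 1) * card {i. i < length xs \<and> \<not> lg_loop (gram_entry xs B) i} = (?q - 1) * (?q + 1)"
      by (simp only: nat_facts(1)[OF q2])
    moreover have "?q - 1 \<noteq> 0" using qpos by simp
    ultimately show ?thesis using mult_left_cancel by blast
  qed
  have part2: "card {j. j < length xs \<and> lg_edge (gram_entry xs B) i j \<and> \<not> lg_loop (gram_entry xs B) j} = ?q
          \<and> card {j. j < length xs \<and> lg_edge (gram_entry xs B) i j \<and> lg_loop (gram_entry xs B) j}
              = ?q ^ 2 - ?q"
    if i: "i < length xs" "\<not> lg_loop (gram_entry xs B) i" for i
  proof -
    define x where "x = xs!i"
    have x: "x \<noteq> 0" "bf B x x = 0" using i nz unfolding x_def by (auto simp: lg_loop_def G)
    define T where "T = {y::'a^3. bf B x y = 0}"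
    obtain u0 where u0: "bf B x u0 \<noteq> 0" using bf_nondeg[OF sym inv x(1)] by blast
    have cT: "card T = ?q^2" unfolding T_def
    proof -
      have a: "bf B x (u+v) = bf B x u + bf B x v" for u v by (simp add: bf_add_right)
      have b: "bf B x (c *s u) = c * bf B x u" for c u by (simp add: bf_smult_right)
      show "card {y. bf B x y = 0} = ?q^2" by (rule lin_fiber_card[where l="bf B x", OF a b u0])
    qed
    have CT: "C \<inter> T = (\<lambda>c. c *s x) ` UNIV"
    proof (intro equalityI subsetI)
      fix y assume "y \<in> C \<inter> T"
      then obtain c where "y = c *s x" using tangent[OF sym inv x] unfolding C_def T_def by auto
      then show "y \<in> (\<lambda>c. c *s x) ` UNIV" by blast
    next
      fix y assume "y \<in> (\<lambda>c. c *s x) ` UNIV"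
      then show "y \<in> C \<inter> T" using x unfolding C_def T_def
        by (auto simp: Q_smult bf_smult_right bf_smult_left)
    qed
    have cCT: "card (C \<inter> T) = ?q" unfolding CT using card_multiples[OF x(1)] by simp
    have ij: "lg_edge (gram_entry xs B) i j \<longleftrightarrow> bf B x (xs!j) \<noteq> 0" for j
      using x by (auto simp: lg_edge_def G x_def)
    have P2inv: "c \<noteq> 0 \<Longrightarrow> (bf B x (c *s y) \<noteq> 0 \<and> bf B (c *s y) (c *s y) = 0) = (bf B x y \<noteq> 0 \<and> bf B y y = 0)" for c y
      by (simp add: Q_smult bf_smult_right bf_smult_left)
    have P3inv: "c \<noteq> 0 \<Longrightarrow> (bf B x (c *s y) \<noteq> 0 \<and> bf B (c *s y) (c *s y) \<noteq> 0) = (bf B x y \<noteq> 0 \<and> bf B y y \<noteq> 0)" for c y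
      by (simp add: Q_smult bf_smult_right bf_smult_left)
    have e2: "{j. j < length xs \<and> lg_edge (gram_entry xs B) i j \<and> \<not> lg_loop (gram_entry xs B) j}
      = {j. j < length xs \<and> (bf B x (xs!j) \<noteq> 0 \<and> bf B (xs!j) (xs!j) = 0)}"
      by (auto simp: ij lg_loop_def G)
    have e3: "{j. j < length xs \<and> lg_edge (gram_entry xs B) i j \<and> lg_loop (gram_entry xs B) j}
      = {j. j < length xs \<and> (bf B x (xs!j) \<noteq> 0 \<and> bf B (xs!j) (xs!j) \<noteq> 0)}"
      by (auto simp: ij lg_loop_def G)
    have v2: "{y. y \<noteq> 0 \<and> (bf B x y \<noteq> 0 \<and> bf B y y = 0)} = C - C \<inter> T"
      unfolding C_def T_def by (auto simp: bf_def)
    have v3: "{y. y \<noteq> 0 \<and> (bf B x y \<noteq> 0 \<and> bf B y y \<noteq> 0)} = (UNIV - T) - (C - C \<inter> T)"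
      unfolding C_def T_def by (auto simp: bf_def)
    have c2: "card (C - C \<inter> T) = ?q^2 - ?q" using cC cCT by (simp add: card_Diff_subset)
    have cUT: "card (UNIV - T) = ?q^3 - ?q^2" using cT by (simp add: card_Diff_subset)
    have c3: "card ((UNIV - T) - (C - C \<inter> T)) = (?q^3 - ?q^2) - (?q^2 - ?q)"
      using cUT c2 by (subst card_Diff_subset) auto
    have "(?q - 1) * card {j. j < length xs \<and> (bf B x (xs!j) \<noteq> 0 \<and> bf B (xs!j) (xs!j) = 0)} = ?q^2 - ?q"
      using proj_count[OF pr, of "\<lambda>y. bf B x y \<noteq> 0 \<and> bf B y y = 0"] P2inv v2 c2 by simp
    then have r2: "(?q - 1) * card {j. j < length xs \<and> lg_edge (gram_entry xs B) i j \<and> \<not> lg_loop (gram_entry xs B) j} = (?q - 1) * ?q"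
      using e2 nat_facts(2)[OF q2] by simp
    have "(?q - 1) * card {j. j < length xs \<and> (bf B x (xs!j) \<noteq> 0 \<and> bf B (xs!j) (xs!j) \<noteq> 0)} = (?q^3 - ?q^2) - (?q^2 - ?q)"
      using proj_count[OF pr, of "\<lambda>y. bf B x y \<noteq> 0 \<and> bf B y y \<noteq> 0"] P3inv v3 c3 by simp
    then have r3: "(?q - 1) * card {j. j < length xs \<and> lg_edge (gram_entry xs B) i j \<and> lg_loop (gram_entry xs B) j} = (?q - 1) * (?q^2 - ?q)"
      using e3 nat_facts(3)[OF q2] by simp
    show ?thesis using r2 r3 qpos by simp
  qed
  show ?thesis using part1 part2 by blast
qed


end
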